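(* Let $U\subseteq\mathbb{R}^{p}$ and $V\subseteq\mathbb{R}^{q}$ be closed sets, and let $f:U\times V\to\mathbb{R}$ and $h:U\times V\to\mathbb{R}^m$ be continuous functions. For $y\in V$ define the set-valued map $G(y)=\{x\in U: h(x,y)\ge 0\}$ (inequality componentwise), with domain $\operatorname{dom}G=\{y\in V: G(y)\neq\emptyset\}$. Let $\{x^{(k)}\}_{k\ge 0}\subseteq U$ and $\{y^{(k)}\}_{k\ge0}\subseteq \operatorname{dom} G$ be sequences with $x^{(k)}\to x^*$ and $y^{(k)}\to y^*$, and let $\tau^{(k)}\ge 0$ with $\tau^{(k)}\to 0$ as $k\to\infty$. Assume that for each $k\ge 1$, $x^{(k)}$ is a minimizer of \[ \min_{x\in U}\ f(x,y^{(k)})+\tau^{(k)}\|x-x^{(k-1)}\|^2\quad \text{s.t.}\quad h(x,y^{(k)})\ge 0 . \] If the set-valued map $G$ is inner semicontinuous relative to $\operatorname{dom}G$, then $x^*$ is a minimizer of \[ \min_{x\in U}\ f(x,y^* )\quad\text{s.t.}\quad h(x,y^* )\ge 0 . \]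
   Context: A set-valued map $G$ defined on a set $V$ is inner semicontinuous at $y\in\operatorname{dom}G$ relative to $\operatorname{dom}G$ if for every $x\in G(y)$ and every sequence $\{y_\ell\}\subseteq\operatorname{dom}G$ with $y_\ell\to y$, there exists a sequence $x_\ell\in G(y_\ell)$ with $x_\ell\to x$. It is inner semicontinuous relative to $\operatorname{dom}G$ if this holds at every point of $\operatorname{dom}G$. $\|\cdot\|$ is the Euclidean norm. *)

theory Defs
  imports "HOL-Analysis.Analysis"
begin

definition constr_map ::
  "(real^'p) set \<Rightarrow> (real^'p \<Rightarrow> real^'q \<Rightarrow> real^'m) \<Rightarrow> real^'q \<Rightarrow> (real^'p) set" where
  "constr_map U h y = {x \<in> U. \<forall>i. 0 \<le> h x y $ i}"

definition constr_dom ::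
  "(real^'q) set \<Rightarrow> (real^'q \<Rightarrow> (real^'p) set) \<Rightarrow> (real^'q) set" where
  "constr_dom V G = {y \<in> V. G y \<noteq> {}}"

definition isc_rel :: "('b::topological_space \<Rightarrow> ('a::topological_space) set) \<Rightarrow> 'b set \<Rightarrow> bool" where
  "isc_rel G D \<longleftrightarrow>
     (\<forall>y\<in>D. \<forall>x\<in>G y. \<forall>ys. (\<forall>l. ys l \<in> D) \<and> ys \<longlonglongrightarrow> y \<longrightarrow>
        (\<exists>xs. (\<forall>l. xs l \<in> G (ys l)) \<and> xs \<longlonglongrightarrow> x))"

end

theory Submission
  imports Defs
begin

lemma cont_seq2:
  fixes g :: "'a::topological_space \<Rightarrow> 'b::topological_space \<Rightarrow> 'c::topological_space"
  assumes "continuous_on (U \<times> V) (\<lambda>(x, y). g x y)"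
    and "a \<longlonglongrightarrow> x0" and "b \<longlonglongrightarrow> y0" and "\<forall>k. a k \<in> U" and "\<forall>k. b k \<in> V"
    and "x0 \<in> U" and "y0 \<in> V"
  shows "(\<lambda>k. g (a k) (b k)) \<longlonglongrightarrow> g x0 y0"
proof -
  show ?thesis
    using continuous_on_tendsto_compose[OF assms(1), of "\<lambda>k. (a k, b k)" "(x0, y0)" sequentially]
      assms by (auto intro: tendsto_Pair)
qed

theorem lemma3p6:
  fixes U :: "(real^'p) set" and V :: "(real^'q) set"
    and f :: "real^'p \<Rightarrow> real^'q \<Rightarrow> real"
    and h :: "real^'p \<Rightarrow> real^'q \<Rightarrow> real^'m"
    and xk :: "nat \<Rightarrow> real^'p" and yk :: "nat \<Rightarrow> real^'q"
    and xstar :: "real^'p" and ystar :: "real^'q"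
    and \<tau> :: "nat \<Rightarrow> real"
  assumes "closed U" and "closed V"
    and "continuous_on (U \<times> V) (\<lambda>(x, y). f x y)"
    and "continuous_on (U \<times> V) (\<lambda>(x, y). h x y)"
    and "\<forall>k. xk k \<in> U"
    and "\<forall>k. yk k \<in> constr_dom V (constr_map U h)"
    and "xk \<longlonglongrightarrow> xstar" and "yk \<longlonglongrightarrow> ystar"
    and "\<forall>k. \<tau> k \<ge> 0" and "\<tau> \<longlonglongrightarrow> 0"
    and "\<forall>k\<ge>1. xk k \<in> constr_map U h (yk k) \<and>
           (\<forall>x \<in> constr_map U h (yk k).
              f (xk k) (yk k) + \<tau> k * (norm (xk k - xk (k - 1)))\<^sup>2
              \<le> f x (yk k) + \<tau> k * (norm (x - xk (k - 1)))\<^sup>2)"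
    and "isc_rel (constr_map U h) (constr_dom V (constr_map U h))"
  shows "xstar \<in> constr_map U h ystar \<and>
         (\<forall>x \<in> constr_map U h ystar. f xstar ystar \<le> f x ystar)"
proof -
  note A = assms
  have ykV: "\<forall>k. yk k \<in> V" using A(6) by (simp add: constr_dom_def)
  have xsU: "xstar \<in> U" using A(1) A(5) A(7) closed_sequentially by blast
  have ysV: "ystar \<in> V" using A(2) ykV A(8) closed_sequentially by blast
  have hlim: "(\<lambda>k. h (xk k) (yk k)) \<longlonglongrightarrow> h xstar ystar"
    by (rule cont_seq2[OF A(4) A(7) A(8) A(5) ykV xsU ysV])
  have mem: "xstar \<in> constr_map U h ystar"
  proof -
    have "0 \<le> h xstar ystar $ i" for i
    proof (rule tendsto_lowerbound)
      show "(\<lambda>k. h (xk k) (yk k) $ i) \<longlonglongrightarrow> h xstar ystar $ i"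
        using hlim by (rule tendsto_vec_nth)
      show "\<forall>\<^sub>F k in sequentially. 0 \<le> h (xk k) (yk k) $ i"
        using A(11) unfolding eventually_sequentially constr_map_def by blast
    qed simp
    then show ?thesis using xsU by (simp add: constr_map_def)
  qed
  have ysD: "ystar \<in> constr_dom V (constr_map U h)"
    using mem ysV by (auto simp: constr_dom_def)
  have opt: "f xstar ystar \<le> f x ystar" if x: "x \<in> constr_map U h ystar" for x
  proof -
    obtain xs where xs: "\<forall>l. xs l \<in> constr_map U h (yk l)" "xs \<longlonglongrightarrow> x"
      using A(12) ysD x A(6) A(8) unfolding isc_rel_def by blast
    have xsU': "\<forall>l. xs l \<in> U" using xs(1) by (simp add: constr_map_def)
    have xU: "x \<in> U" using x by (simp add: constr_map_def)
    have L: "(\<lambda>k. f (xk (Suc k)) (yk (Suc k))) \<longlonglongrightarrow> f xstar ystar"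
      by (rule cont_seq2[OF A(3) LIMSEQ_Suc[OF A(7)] LIMSEQ_Suc[OF A(8)]])
         (use A(5) ykV xsU ysV in auto)
    have R0: "(\<lambda>k. f (xs (Suc k)) (yk (Suc k))) \<longlonglongrightarrow> f x ystar"
      by (rule cont_seq2[OF A(3) LIMSEQ_Suc[OF xs(2)] LIMSEQ_Suc[OF A(8)]])
         (use xsU' ykV xU ysV in auto)
    have R: "(\<lambda>k. f (xs (Suc k)) (yk (Suc k)) + \<tau> (Suc k) * (norm (xs (Suc k) - xk k))\<^sup>2)
        \<longlonglongrightarrow> f x ystar + 0 * (norm (x - xstar))\<^sup>2"
      by (intro tendsto_intros R0 LIMSEQ_Suc[OF A(10)] xs(2) A(7) LIMSEQ_Suc[OF xs(2)])
    have R': "(\<lambda>k. f (xs (Suc k)) (yk (Suc k)) + \<tau> (Suc k) * (norm (xs (Suc k) - xk k))\<^sup>2)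
        \<longlonglongrightarrow> f x ystar" using R by simp
    show ?thesis
    proof (rule tendsto_le[OF _ R' L])
      show "\<forall>\<^sub>F k in sequentially. f (xk (Suc k)) (yk (Suc k))
          \<le> f (xs (Suc k)) (yk (Suc k)) + \<tau> (Suc k) * (norm (xs (Suc k) - xk k))\<^sup>2"
      proof (rule always_eventually, rule allI)
        fix k
        have "f (xk (Suc k)) (yk (Suc k)) + \<tau> (Suc k) * (norm (xk (Suc k) - xk (Suc k - 1)))\<^sup>2
              \<le> f (xs (Suc k)) (yk (Suc k)) + \<tau> (Suc k) * (norm (xs (Suc k) - xk (Suc k - 1)))\<^sup>2"
          using spec[OF A(11), of "Suc k"] xs(1) by auto
        moreover have "0 \<le> \<tau> (Suc k) * (norm (xk (Suc k) - xk (Suc k - 1)))\<^sup>2"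
          using A(9) by simp
        ultimately show "f (xk (Suc k)) (yk (Suc k))
          \<le> f (xs (Suc k)) (yk (Suc k)) + \<tau> (Suc k) * (norm (xs (Suc k) - xk k))\<^sup>2"
          by simp
      qed
    qed simp
  qed
  show ?thesis using mem opt by blast
qed

end
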